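(* Let $k(x)=x^2$ and for $\xi>0$ let $S_\xi$ be the operator on $L^2(0,\xi)$ given by $(S_\xi f)(x)=f(x)+\int_0^\xi f(t)(x-t)^2\,dt$. Then $S_\xi$ is invertible for all $\xi>0$ except where $\Delta(\xi)=\frac{\xi^9}{1080}-\frac{\xi^6}{30}+1$ vanishes, and for every $\xi>0$ at which $S_\xi$ is invertible, $$h_2(\xi):=(S_\xi^{-1}1)(\xi)=\frac{\frac16\xi^3-1}{\frac1{180}\xi^6-\frac16\xi^3-1}.$$ Moreover the rational function $r(x)=\frac{1}{\sqrt2\,h_2(2x)}$ has only simple zeros and simple poles, satisfies $r''(x_k)=0$ at every zero $x_k$ of $r$, and $q''(y_\ell)=0$ at every zero $y_\ell$ of $q=1/r$.
   Context: Here $S_\xi^{-1}1$ is a polynomial in $x$, and $(S_\xi^{-1}1)(\xi)$ denotes its value at $x=\xi$. *)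

theory Defs
  imports "HOL-Analysis.Analysis" "HOL-Computational_Algebra.Polynomial"
begin

text \<open>Elements of L^2(0,xi), represented by (real-valued) functions; equality in L^2 is
  equality almost everywhere on the interval.\<close>
definition L2 :: "real \<Rightarrow> (real \<Rightarrow> real) \<Rightarrow> bool" where
  "L2 xi f \<longleftrightarrow> set_borel_measurable lborel {0..xi} f
      \<and> set_integrable lborel {0..xi} (\<lambda>x. (f x)\<^sup>2)"

definition ae_eq_on :: "real \<Rightarrow> (real \<Rightarrow> real) \<Rightarrow> (real \<Rightarrow> real) \<Rightarrow> bool" where
  "ae_eq_on xi f g \<longleftrightarrow> (AE x in lborel. x \<in> {0..xi} \<longrightarrow> f x = g x)"

definition Sop :: "real \<Rightarrow> (real \<Rightarrow> real) \<Rightarrow> real \<Rightarrow> real" where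
  "Sop xi f x = f x + (LINT t:{0..xi}|lborel. f t * (x - t)\<^sup>2)"

text \<open>S_xi is invertible on L^2(0,xi): bijective on L^2 classes (bounded inverse then
  follows from the open mapping theorem, S_xi being bounded).\<close>
definition S_invertible :: "real \<Rightarrow> bool" where
  "S_invertible xi \<longleftrightarrow>
     (\<forall>g. L2 xi g \<longrightarrow> (\<exists>f. L2 xi f \<and> ae_eq_on xi (Sop xi f) g))
   \<and> (\<forall>f1 f2. L2 xi f1 \<and> L2 xi f2 \<and> ae_eq_on xi (Sop xi f1) (Sop xi f2)
        \<longrightarrow> ae_eq_on xi f1 f2)"

definition Delta :: "real \<Rightarrow> real" where
  "Delta xi = xi ^ 9 / 1080 - xi ^ 6 / 30 + 1"

definition h2 :: "complex \<Rightarrow> complex" where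
  "h2 z = (z ^ 3 / 6 - 1) / (z ^ 6 / 180 - z ^ 3 / 6 - 1)"

definition r_fun :: "complex \<Rightarrow> complex" where
  "r_fun x = 1 / (complex_of_real (sqrt 2) * h2 (2 * x))"

definition q_fun :: "complex \<Rightarrow> complex" where
  "q_fun x = 1 / r_fun x"

end

theory Submission
  imports Defs
begin


definition mom :: "real \<Rightarrow> (real \<Rightarrow> real) \<Rightarrow> nat \<Rightarrow> real" where
  "mom xi f i = (LINT t:{0..xi}|lborel. f t * t ^ i)"

definition MI :: "real \<Rightarrow> (real \<Rightarrow> real) \<Rightarrow> bool" where
  "MI xi f \<longleftrightarrow> (\<forall>i. set_integrable lborel {0..xi} (\<lambda>t. f t * t ^ i))"

lemma L2_MI:
  assumes "L2 xi f" "xi \<ge> 0"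
  shows "MI xi f"
  unfolding MI_def
proof
  fix i :: nat
  have i1: "set_integrable lborel {0..xi} (\<lambda>t. 1::real)"
    by (rule borel_integrable_atLeastAtMost') (rule continuous_on_const)
  have i2: "set_integrable lborel {0..xi} (\<lambda>t. (f t)\<^sup>2)" using assms unfolding L2_def by auto
  have ib: "set_integrable lborel {0..xi} (\<lambda>t. xi ^ i * (1 + (f t)\<^sup>2))"
    using set_integral_add(1)[OF i1 i2] by (rule set_integrable_mult_right)
  have m: "set_borel_measurable lborel {0..xi} (\<lambda>t. f t * t ^ i)"
  proof -
    have "(\<lambda>x. indicator {0..xi} x *\<^sub>R f x) \<in> borel_measurable lborel"
      using assms unfolding L2_def set_borel_measurable_def by auto
    then have "(\<lambda>x. (indicator {0..xi} x *\<^sub>R f x) * x ^ i) \<in> borel_measurable lborel"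
      by measurable
    moreover have "(\<lambda>x. (indicator {0..xi} x *\<^sub>R f x) * x ^ i) = (\<lambda>x. indicator {0..xi} x *\<^sub>R (f x * x ^ i))"
      by auto
    ultimately show ?thesis unfolding set_borel_measurable_def by simp
  qed
  show "set_integrable lborel {0..xi} (\<lambda>t. f t * t ^ i)"
  proof (rule set_integrable_bound[OF ib m], rule AE_I2, intro impI)
    fix t assume t: "t \<in> {0..xi}"
    have a: "\<bar>f t\<bar> \<le> 1 + (f t)\<^sup>2"
    proof -
      have "0 \<le> (\<bar>f t\<bar> - 1)\<^sup>2" by simp
      then show ?thesis by (simp add: power2_eq_square algebra_simps abs_mult_self_eq)
    qed
    have b: "\<bar>t ^ i\<bar> \<le> xi ^ i" using t by (simp add: power_abs power_mono)
    have "\<bar>f t * t ^ i\<bar> \<le> (1 + (f t)\<^sup>2) * xi ^ i"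
      unfolding abs_mult by (rule mult_mono[OF a b]) auto
    moreover have "(1 + (f t)\<^sup>2) * xi ^ i \<ge> 0" using assms by simp
    ultimately show "norm (f t * t ^ i) \<le> norm (xi ^ i * (1 + (f t)\<^sup>2))"
      by (simp add: mult.commute)
  qed
qed

lemma poly_cont: "continuous_on S (\<lambda>t::real. (a + b * t + c * t\<^sup>2) * t ^ i)"
  by (intro continuous_intros)

lemma MI_poly: "MI xi (\<lambda>t. a + b * t + c * t\<^sup>2)"
  unfolding MI_def by (auto intro!: borel_integrable_atLeastAtMost' continuous_intros)

lemma L2_poly: "L2 xi (\<lambda>t. a + b * t + c * t\<^sup>2)"
  unfolding L2_def set_borel_measurable_def
  by (auto intro!: borel_integrable_atLeastAtMost' continuous_intros)

lemma MI_diff: "MI xi f \<Longrightarrow> MI xi g \<Longrightarrow> MI xi (\<lambda>t. f t - g t)"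
  unfolding MI_def by (auto simp: left_diff_distrib intro!: set_integral_diff)

lemma MI_zero: "MI xi (\<lambda>t. 0)"
  unfolding MI_def by (simp add: set_integrable_def)

lemma mom_diff: "MI xi f \<Longrightarrow> MI xi g \<Longrightarrow> mom xi (\<lambda>t. f t - g t) i = mom xi f i - mom xi g i"
  unfolding MI_def mom_def by (auto simp: left_diff_distrib intro!: set_integral_diff)

lemma mom_poly:
  assumes "xi \<ge> 0"
  shows "mom xi (\<lambda>t. a + b * t + c * t\<^sup>2) i =
    a * xi ^ (i+1) / (i+1) + b * xi ^ (i+2) / (i+2) + c * xi ^ (i+3) / (i+3)"
proof -
  let ?F = "\<lambda>t::real. a * t ^ (i+1) / (i+1) + b * t ^ (i+2) / (i+2) + c * t ^ (i+3) / (i+3)"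
  have "integral\<^sup>L lborel (\<lambda>x. indicator {0 .. xi} x *\<^sub>R ((a + b * x + c * x\<^sup>2) * x ^ i)) = ?F xi - ?F 0"
  proof (rule integral_FTC_atLeastAtMost[OF assms])
    fix x :: real
    have "(?F has_real_derivative (a + b * x + c * x\<^sup>2) * x ^ i) (at x)"
      by (rule derivative_eq_intros refl | simp)+ (simp add: field_simps power2_eq_square)
    then show "(?F has_vector_derivative (a + b * x + c * x\<^sup>2) * x ^ i) (at x within {0..xi})"
      by (simp add: has_real_derivative_iff_has_vector_derivative has_vector_derivative_at_within)
  qed (intro continuous_intros)
  then show ?thesis unfolding mom_def set_lebesgue_integral_def by simp
qed

lemma Sop_formula:
  assumes "MI xi f"
  shows "Sop xi f x = f x + x\<^sup>2 * mom xi f 0 - 2 * x * mom xi f 1 + mom xi f 2"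
proof -
  have i: "set_integrable lborel {0..xi} (\<lambda>t. f t * t ^ i)" for i
    using assms unfolding MI_def by auto
  have e: "(\<lambda>t. f t * (x - t)\<^sup>2) = (\<lambda>t. (x\<^sup>2 * (f t * t ^ 0) - 2 * x * (f t * t ^ 1)) + f t * t ^ 2)"
    by (auto simp: power2_eq_square algebra_simps)
  have "(LINT t:{0..xi}|lborel. f t * (x - t)\<^sup>2) =
      (LINT t:{0..xi}|lborel. (x\<^sup>2 * (f t * t ^ 0) - 2 * x * (f t * t ^ 1)) + f t * t ^ 2)"
    by (simp only: e)
  also have "\<dots> = x\<^sup>2 * mom xi f 0 - 2 * x * mom xi f 1 + mom xi f 2"
    unfolding mom_def
    by (subst set_integral_add(2), (intro set_integral_diff set_integrable_mult_right i)+,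
        subst set_integral_diff(2), (intro set_integrable_mult_right i)+) simp
  finally show ?thesis unfolding Sop_def by simp
qed

lemma mom_cong:
  assumes "MI xi f" "MI xi g" "ae_eq_on xi f g"
  shows "mom xi f i = mom xi g i"
proof -
  have m: "(\<lambda>t. indicator {0..xi} t *\<^sub>R (h t * t ^ i)) \<in> borel_measurable lborel" if "MI xi h" for h
    using that unfolding MI_def set_integrable_def by (metis borel_measurable_integrable measurable_lborel1)
  show ?thesis
    unfolding mom_def set_lebesgue_integral_def
    apply (rule integral_cong_AE[OF m[OF assms(1)] m[OF assms(2)]])
    using assms(3) unfolding ae_eq_on_def by eventually_elim (auto simp: indicator_def)
qed

definition mu :: "real \<Rightarrow> nat \<Rightarrow> real" where "mu xi k = xi ^ (k+1) / (k+1)"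

lemma key:
  assumes xi: "xi \<ge> 0" and f: "MI xi f" and g: "MI xi g" and S: "ae_eq_on xi (Sop xi f) g"
  defines "A \<equiv> mom xi f 2" and "B \<equiv> - 2 * mom xi f 1" and "C \<equiv> mom xi f 0"
  shows "ae_eq_on xi f (\<lambda>t. g t - (A + B * t + C * t\<^sup>2))"
    and "A * (1 + mu xi 2) + B * mu xi 3 + C * mu xi 4 = mom xi g 2"
    and "-2 * mu xi 1 * A + (1 - 2 * mu xi 2) * B - 2 * mu xi 3 * C = -2 * mom xi g 1"
    and "mu xi 0 * A + mu xi 1 * B + (1 + mu xi 2) * C = mom xi g 0"
proof -
  show ae: "ae_eq_on xi f (\<lambda>t. g t - (A + B * t + C * t\<^sup>2))"
    using S unfolding ae_eq_on_def A_def B_def C_def Sop_formula[OF f]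
    by eventually_elim (auto simp: algebra_simps)
  have mp: "MI xi (\<lambda>t. A + B * t + C * t\<^sup>2)" by (rule MI_poly)
  have "mom xi f i = mom xi (\<lambda>t. g t - (A + B * t + C * t\<^sup>2)) i" for i
    by (rule mom_cong[OF f MI_diff[OF g mp] ae])
  also have "\<dots> i = mom xi g i - (A * mu xi i + B * mu xi (i+1) + C * mu xi (i+2))" for i
    by (simp add: mom_diff[OF g mp] mom_poly[OF xi] mu_def add.commute power_add power3_eq_cube)
  finally have *: "mom xi f i = mom xi g i - (A * mu xi i + B * mu xi (i+1) + C * mu xi (i+2))" for i .
  show "A * (1 + mu xi 2) + B * mu xi 3 + C * mu xi 4 = mom xi g 2"
    using *[of 2] unfolding A_def[symmetric] by (simp add: algebra_simps eval_nat_numeral)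
  show "-2 * mu xi 1 * A + (1 - 2 * mu xi 2) * B - 2 * mu xi 3 * C = -2 * mom xi g 1"
    using *[of 1] unfolding B_def by (simp add: algebra_simps eval_nat_numeral)
  show "mu xi 0 * A + mu xi 1 * B + (1 + mu xi 2) * C = mom xi g 0"
    using *[of 0] unfolding C_def[symmetric] by (simp add: algebra_simps eval_nat_numeral)
qed



definition det3 :: "real \<Rightarrow> real \<Rightarrow> real \<Rightarrow> real \<Rightarrow> real \<Rightarrow> real \<Rightarrow> real \<Rightarrow> real \<Rightarrow> real \<Rightarrow> real" where
  "det3 a b c d e f g h i = a*(e*i - f*h) - b*(d*i - f*g) + c*(d*h - e*g)"

lemma cramer3:
  fixes a b c d e f g h i r1 r2 r3 :: real
  assumes D: "det3 a b c d e f g h i \<noteq> 0"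
  defines "x \<equiv> (r1*(e*i-f*h) - b*(r2*i - f*r3) + c*(r2*h - e*r3)) / det3 a b c d e f g h i"
      and "y \<equiv> (a*(r2*i - f*r3) - r1*(d*i-f*g) + c*(d*r3 - r2*g)) / det3 a b c d e f g h i"
      and "z \<equiv> (a*(e*r3 - r2*h) - b*(d*r3 - r2*g) + r1*(d*h - e*g)) / det3 a b c d e f g h i"
  shows "a*x+b*y+c*z = r1 \<and> d*x+e*y+f*z = r2 \<and> g*x+h*y+i*z = r3"
proof -
  let ?D = "det3 a b c d e f g h i"
  have e1: "a*(r1*(e*i-f*h) - b*(r2*i - f*r3) + c*(r2*h - e*r3)) + b*(a*(r2*i - f*r3) - r1*(d*i-f*g) + c*(d*r3 - r2*g))
     + c*(a*(e*r3 - r2*h) - b*(d*r3 - r2*g) + r1*(d*h - e*g)) = r1 * ?D"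
   and e2: "d*(r1*(e*i-f*h) - b*(r2*i - f*r3) + c*(r2*h - e*r3)) + e*(a*(r2*i - f*r3) - r1*(d*i-f*g) + c*(d*r3 - r2*g))
     + f*(a*(e*r3 - r2*h) - b*(d*r3 - r2*g) + r1*(d*h - e*g)) = r2 * ?D"
   and e3: "g*(r1*(e*i-f*h) - b*(r2*i - f*r3) + c*(r2*h - e*r3)) + h*(a*(r2*i - f*r3) - r1*(d*i-f*g) + c*(d*r3 - r2*g))
     + i*(a*(e*r3 - r2*h) - b*(d*r3 - r2*g) + r1*(d*h - e*g)) = r3 * ?D"
    unfolding det3_def by algebra+
  show ?thesis unfolding x_def y_def z_def
    using D e1 e2 e3 by (simp add: add_divide_distrib[symmetric] times_divide_eq_right)
qed

lemma uniq3:
  fixes a b c d e f g h i x y z :: real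
  assumes D: "det3 a b c d e f g h i \<noteq> 0"
  and "a*x+b*y+c*z = 0" "d*x+e*y+f*z = 0" "g*x+h*y+i*z = 0"
  shows "x = 0 \<and> y = 0 \<and> z = 0"
proof -
  have "x * det3 a b c d e f g h i = 0" "y * det3 a b c d e f g h i = 0" "z * det3 a b c d e f g h i = 0"
    using assms(2-4) unfolding det3_def by algebra+
  with D show ?thesis by simp
qed

lemma uniq3':
  fixes a b c d e f g h i x y z x' y' z' :: real
  assumes D: "det3 a b c d e f g h i \<noteq> 0"
  and "a*x+b*y+c*z = r1" "d*x+e*y+f*z = r2" "g*x+h*y+i*z = r3"
  and "a*x'+b*y'+c*z' = r1" "d*x'+e*y'+f*z' = r2" "g*x'+h*y'+i*z' = r3"
  shows "x = x' \<and> y = y' \<and> z = z'"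
  using uniq3[OF D, of "x - x'" "y - y'" "z - z'"] assms(2-) by (simp add: algebra_simps)

lemma kern1:
  fixes a b c d e f g h i :: real
  assumes "det3 a b c d e f g h i = 0"
  shows "a*(e*i - f*h) + b*(-(d*i - f*g)) + c*(d*h - e*g) = 0 \<and>
         d*(e*i - f*h) + e*(-(d*i - f*g)) + f*(d*h - e*g) = 0 \<and>
         g*(e*i - f*h) + h*(-(d*i - f*g)) + i*(d*h - e*g) = 0"
  using assms unfolding det3_def by (simp add: algebra_simps)

lemma kern2:
  fixes a b c d e f g h i :: real
  assumes "det3 a b c d e f g h i = 0"
  shows "a*(-(b*i - c*h)) + b*(a*i - c*g) + c*(-(a*h - b*g)) = 0 \<and>
         d*(-(b*i - c*h)) + e*(a*i - c*g) + f*(-(a*h - b*g)) = 0 \<and>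
         g*(-(b*i - c*h)) + h*(a*i - c*g) + i*(-(a*h - b*g)) = 0"
  using assms unfolding det3_def by (simp add: algebra_simps)

lemma detM: "det3 (1 + mu xi 2) (mu xi 3) (mu xi 4) (-2 * mu xi 1) (1 - 2 * mu xi 2) (-2 * mu xi 3)
   (mu xi 0) (mu xi 1) (1 + mu xi 2) = Delta xi"
  unfolding det3_def mu_def Delta_def by (simp add: field_simps) algebra



lemma L2_diff:
  assumes "L2 xi f" "L2 xi g"
  shows "L2 xi (\<lambda>t. f t - g t)"
proof -
  have mf: "(\<lambda>x. indicator {0..xi} x *\<^sub>R f x) \<in> borel_measurable lborel"
   and mg: "(\<lambda>x. indicator {0..xi} x *\<^sub>R g x) \<in> borel_measurable lborel"
    using assms unfolding L2_def set_borel_measurable_def by auto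
  have e1: "(\<lambda>x. indicator {0..xi} x *\<^sub>R (f x - g x)) = (\<lambda>x. indicator {0..xi} x *\<^sub>R f x - indicator {0..xi} x *\<^sub>R g x)"
    by (auto simp: algebra_simps)
  have m1: "set_borel_measurable lborel {0..xi} (\<lambda>t. f t - g t)"
    unfolding set_borel_measurable_def e1 using mf mg by measurable
  have e2: "(\<lambda>x. indicator {0..xi} x *\<^sub>R (f x - g x)\<^sup>2) = (\<lambda>x. (indicator {0..xi} x *\<^sub>R f x - indicator {0..xi} x *\<^sub>R g x)\<^sup>2)"
    by (auto simp: indicator_def)
  have m2: "set_borel_measurable lborel {0..xi} (\<lambda>t. (f t - g t)\<^sup>2)"
    unfolding set_borel_measurable_def e2 using mf mg by measurable
  have i: "set_integrable lborel {0..xi} (\<lambda>t. 2 * (f t)\<^sup>2 + 2 * (g t)\<^sup>2)"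
    using assms unfolding L2_def by (intro set_integral_add set_integrable_mult_right) auto
  have "set_integrable lborel {0..xi} (\<lambda>t. (f t - g t)\<^sup>2)"
  proof (rule set_integrable_bound[OF i m2], rule AE_I2, intro impI)
    fix t
    have "0 \<le> (f t + g t)\<^sup>2" by simp
    then have "(f t - g t)\<^sup>2 \<le> 2 * (f t)\<^sup>2 + 2 * (g t)\<^sup>2"
      by (simp add: power2_eq_square algebra_simps)
    then show "norm ((f t - g t)\<^sup>2) \<le> norm (2 * (f t)\<^sup>2 + 2 * (g t)\<^sup>2)"
      by simp
  qed
  with m1 show ?thesis unfolding L2_def by simp
qed

lemma mom_zero: "mom xi (\<lambda>t. 0) i = 0"
  unfolding mom_def by simp

lemma Sop_zero: "Sop xi (\<lambda>t. 0) x = 0"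
  unfolding Sop_def by simp

abbreviation "Mdet xi \<equiv> det3 (1 + mu xi 2) (mu xi 3) (mu xi 4) (-2 * mu xi 1) (1 - 2 * mu xi 2) (-2 * mu xi 3)
   (mu xi 0) (mu xi 1) (1 + mu xi 2)"

lemma inv_if:
  assumes xi: "xi > 0" and D: "Delta xi \<noteq> 0"
  shows "S_invertible xi"
  unfolding S_invertible_def
proof (intro conjI allI impI)
  have D': "Mdet xi \<noteq> 0" using D detM by simp
  fix g assume g: "L2 xi g"
  have gm: "MI xi g" using L2_MI g xi by simp
  obtain x y z where sol:
    "(1 + mu xi 2)*x + (mu xi 3)*y + (mu xi 4)*z = mom xi g 2"
    "(-2 * mu xi 1)*x + (1 - 2 * mu xi 2)*y + (-2 * mu xi 3)*z = -2 * mom xi g 1"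
    "(mu xi 0)*x + (mu xi 1)*y + (1 + mu xi 2)*z = mom xi g 0"
    using cramer3[OF D', of "mom xi g 2" "-2 * mom xi g 1" "mom xi g 0"] by blast
  define F where "F = (\<lambda>t. g t - (x + y * t + z * t\<^sup>2))"
  have FL: "L2 xi F" unfolding F_def by (intro L2_diff g L2_poly)
  have FM: "MI xi F" unfolding F_def by (intro MI_diff gm MI_poly)
  have mF: "mom xi F i = mom xi g i - (x * mu xi i + y * mu xi (i+1) + z * mu xi (i+2))" for i
    unfolding F_def using xi
    by (simp add: mom_diff[OF gm MI_poly] mom_poly mu_def add.commute power_add power3_eq_cube)
  have "mom xi F 2 = x" using mF[of 2] sol(1) by (simp add: algebra_simps eval_nat_numeral)
  moreover have "mom xi F 1 = - y / 2" using mF[of 1] sol(2) by (simp add: algebra_simps eval_nat_numeral)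
  moreover have "mom xi F 0 = z" using mF[of 0] sol(3) by (simp add: algebra_simps eval_nat_numeral)
  ultimately have "Sop xi F t = g t" for t
    unfolding Sop_formula[OF FM] by (simp add: F_def algebra_simps)
  then show "\<exists>f. L2 xi f \<and> ae_eq_on xi (Sop xi f) g"
    using FL unfolding ae_eq_on_def by auto
next
  have D': "Mdet xi \<noteq> 0" using D detM by simp
  fix f1 f2 assume a: "L2 xi f1 \<and> L2 xi f2 \<and> ae_eq_on xi (Sop xi f1) (Sop xi f2)"
  define h where "h = (\<lambda>t. f1 t - f2 t)"
  have m1: "MI xi f1" and m2: "MI xi f2" using a L2_MI xi by auto
  have hm: "MI xi h" unfolding h_def by (intro MI_diff m1 m2)
  have "Sop xi h t = Sop xi f1 t - Sop xi f2 t" for t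
    unfolding Sop_formula[OF hm] Sop_formula[OF m1] Sop_formula[OF m2]
    unfolding h_def mom_diff[OF m1 m2]
    by (simp add: algebra_simps)
  then have "ae_eq_on xi (Sop xi h) (\<lambda>t. 0)"
    using a unfolding ae_eq_on_def by auto
  note k = key[OF less_imp_le[OF xi] hm MI_zero this, unfolded mom_zero]
  have "mom xi h 2 = 0 \<and> - 2 * mom xi h 1 = 0 \<and> mom xi h 0 = 0"
    by (rule uniq3[OF D']) (use k(2-4) in \<open>simp_all add: algebra_simps\<close>)
  then have "ae_eq_on xi h (\<lambda>t. 0)"
    using k(1) by simp
  then show "ae_eq_on xi f1 f2"
    unfolding ae_eq_on_def h_def by eventually_elim auto
qed

lemma not_inv_if:
  assumes xi: "xi > 0" and D: "Delta xi = 0"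
  shows "\<not> S_invertible xi"
proof
  assume inv: "S_invertible xi"
  have D': "Mdet xi = 0" using D detM by simp
  have "\<exists>x y z. (x \<noteq> 0 \<or> y \<noteq> 0 \<or> z \<noteq> 0) \<and>
    (1 + mu xi 2)*x + (mu xi 3)*y + (mu xi 4)*z = 0 \<and>
    (-2 * mu xi 1)*x + (1 - 2 * mu xi 2)*y + (-2 * mu xi 3)*z = 0 \<and>
    (mu xi 0)*x + (mu xi 1)*y + (1 + mu xi 2)*z = 0"
  proof (cases "xi ^ 3 = 6")
    case True
    have "-((mu xi 3) * (1 + mu xi 2) - (mu xi 4) * (mu xi 1)) = - (xi^4 * (1/4 - xi^3/60))"
      unfolding mu_def by (simp add: field_simps) algebra
    also have "\<dots> \<noteq> 0" using True xi by simp
    finally show ?thesis using kern2[OF D'] by blast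
  next
    case False
    have "(1 - 2 * mu xi 2) * (1 + mu xi 2) - (-2 * mu xi 3) * (mu xi 1) = (1 - xi^3/6)\<^sup>2"
      unfolding mu_def by (simp add: field_simps) algebra
    also have "\<dots> \<noteq> 0" using False by simp
    finally show ?thesis using kern1[OF D'] by blast
  qed
  then obtain x y z where nz: "x \<noteq> 0 \<or> y \<noteq> 0 \<or> z \<noteq> 0" and sol:
    "(1 + mu xi 2)*x + (mu xi 3)*y + (mu xi 4)*z = 0"
    "(-2 * mu xi 1)*x + (1 - 2 * mu xi 2)*y + (-2 * mu xi 3)*z = 0"
    "(mu xi 0)*x + (mu xi 1)*y + (1 + mu xi 2)*z = 0" by blast
  define F where "F = (\<lambda>t. 0 - (x + y * t + z * t\<^sup>2))"
  have FL: "L2 xi F" unfolding F_def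
    using L2_diff[OF L2_poly[of xi 0 0 0] L2_poly[of xi x y z]] by simp
  have FM: "MI xi F" unfolding F_def by (intro MI_diff MI_zero MI_poly)
  have mF: "mom xi F i = 0 - (x * mu xi i + y * mu xi (i+1) + z * mu xi (i+2))" for i
    unfolding F_def mom_diff[OF MI_zero MI_poly] mom_zero mom_poly[OF less_imp_le[OF xi]]
    by (simp add: mu_def add.commute power_add power3_eq_cube)
  have "mom xi F 2 = x" using mF[of 2] sol(1) by (simp add: algebra_simps eval_nat_numeral)
  moreover have "mom xi F 1 = - y / 2" using mF[of 1] sol(2) by (simp add: algebra_simps eval_nat_numeral)
  moreover have "mom xi F 0 = z" using mF[of 0] sol(3) by (simp add: algebra_simps eval_nat_numeral)
  ultimately have S0: "Sop xi F t = Sop xi (\<lambda>t. 0) t" for t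
    unfolding Sop_formula[OF FM] Sop_zero by (simp add: F_def algebra_simps)
  have z0: "L2 xi (\<lambda>t. 0)" using L2_poly[of xi 0 0 0] by simp
  have "ae_eq_on xi F (\<lambda>t. 0)"
    using inv FL z0 S0 unfolding S_invertible_def ae_eq_on_def by auto
  then have "mom xi F i = 0" for i using mom_cong[OF FM MI_zero] mom_zero by metis
  with \<open>mom xi F 2 = x\<close> \<open>mom xi F 1 = - y / 2\<close> \<open>mom xi F 0 = z\<close> nz show False by auto
qed



lemma mom_one: "xi \<ge> 0 \<Longrightarrow> mom xi (\<lambda>t. 1) i = mu xi i"
  using mom_poly[of xi 1 0 0 i] by (simp add: mu_def)

lemma MI_one: "MI xi (\<lambda>t. 1)"
  using MI_poly[of xi 1 0 0] by simp

lemma part2: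
  assumes xi: "xi > 0" and inv: "S_invertible xi"
  shows "\<exists>p :: real poly.
             (\<forall>f. L2 xi f \<and> ae_eq_on xi (Sop xi f) (\<lambda>_. 1) \<longrightarrow> ae_eq_on xi f (poly p))
           \<and> poly p xi = (xi ^ 3 / 6 - 1) / (xi ^ 6 / 180 - xi ^ 3 / 6 - 1)"
proof -
  have D: "Delta xi \<noteq> 0" using not_inv_if[OF xi] inv by blast
  have D': "Mdet xi \<noteq> 0" using D detM by simp
  define a where "a = 1 + mu xi 2"
  define b where "b = mu xi 3"
  define c where "c = mu xi 4"
  define d where "d = -2 * mu xi 1"
  define e where "e = 1 - 2 * mu xi 2"
  define f where "f = -2 * mu xi 3"
  define g where "g = mu xi 0"
  define h where "h = mu xi 1"
  define i where "i = 1 + mu xi 2"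
  define r1 where "r1 = mu xi 2"
  define r2 where "r2 = -2 * mu xi 1"
  define r3 where "r3 = mu xi 0"
  define x where "x = (r1*(e*i-f*h) - b*(r2*i - f*r3) + c*(r2*h - e*r3)) / det3 a b c d e f g h i"
  define y where "y = (a*(r2*i - f*r3) - r1*(d*i-f*g) + c*(d*r3 - r2*g)) / det3 a b c d e f g h i"
  define z where "z = (a*(e*r3 - r2*h) - b*(d*r3 - r2*g) + r1*(d*h - e*g)) / det3 a b c d e f g h i"
  have D2: "det3 a b c d e f g h i \<noteq> 0" using D' unfolding a_def b_def c_def d_def e_def f_def g_def h_def i_def .
  have sol: "a*x+b*y+c*z = r1 \<and> d*x+e*y+f*z = r2 \<and> g*x+h*y+i*z = r3"
    unfolding x_def y_def z_def by (rule cramer3[OF D2])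
  define p where "p = [:1 - x, -y, -z:]"
  have pv: "poly p t = 1 - (x + y * t + z * t\<^sup>2)" for t
    unfolding p_def by (simp add: algebra_simps power2_eq_square)
  have "\<forall>F. L2 xi F \<and> ae_eq_on xi (Sop xi F) (\<lambda>_. 1) \<longrightarrow> ae_eq_on xi F (poly p)"
  proof (intro allI impI)
    fix F assume FF: "L2 xi F \<and> ae_eq_on xi (Sop xi F) (\<lambda>_. 1)"
    have FM: "MI xi F" using FF L2_MI xi by auto
    have Sae: "ae_eq_on xi (Sop xi F) (\<lambda>_. 1)" using FF by simp
    note k = key[OF less_imp_le[OF xi] FM MI_one Sae, unfolded mom_one[OF less_imp_le[OF xi]]]
    have "mom xi F 2 = x \<and> - 2 * mom xi F 1 = y \<and> mom xi F 0 = z"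
      using sol by (intro uniq3'[OF D2 _ _ _ conjunct1[OF sol] conjunct1[OF conjunct2[OF sol]] conjunct2[OF conjunct2[OF sol]]]) (use k(2-4) in \<open>simp_all add: a_def b_def c_def d_def e_def f_def g_def h_def i_def r1_def r2_def r3_def algebra_simps\<close>)
    then show "ae_eq_on xi F (poly p)"
      using k(1) FF unfolding pv by simp
  qed
  moreover have "poly p xi = (xi ^ 3 / 6 - 1) / (xi ^ 6 / 180 - xi ^ 3 / 6 - 1)"
  proof -
    let ?E = "xi ^ 6 / 180 - xi ^ 3 / 6 - 1"
    have DE: "Delta xi = (xi^3 - 6) * ?E / 6" unfolding Delta_def by (simp add: field_simps)
    have E: "?E \<noteq> 0" using D DE by auto
    let ?N = "(r1*(e*i-f*h) - b*(r2*i - f*r3) + c*(r2*h - e*r3)) + (a*(r2*i - f*r3) - r1*(d*i-f*g) + c*(d*r3 - r2*g)) * xi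
       + (a*(e*r3 - r2*h) - b*(d*r3 - r2*g) + r1*(d*h - e*g)) * xi^2"
    have dd: "det3 a b c d e f g h i = Delta xi"
      using detM unfolding a_def b_def c_def d_def e_def f_def g_def h_def i_def .
    have pn: "poly p xi = (Delta xi - ?N) / Delta xi"
      unfolding pv x_def y_def z_def dd using D by (simp add: field_simps power2_eq_square)
    have id: "(Delta xi - ?N) * ?E = (xi ^ 3 / 6 - 1) * Delta xi"
      unfolding a_def b_def c_def d_def e_def f_def g_def h_def i_def r1_def r2_def r3_def mu_def Delta_def
      by (simp add: field_simps) algebra
    show ?thesis unfolding pn using D E id by (simp add: field_simps)
  qed
  ultimately show ?thesis by blast
qed



lemma second_deriv_quot:
  fixes F G F1 F2 G1 G2 h :: "complex \<Rightarrow> complex"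
  assumes dF: "\<And>x. (F has_field_derivative F1 x) (at x)" and dF1: "\<And>x. (F1 has_field_derivative F2 x) (at x)"
    and dG: "\<And>x. (G has_field_derivative G1 x) (at x)" and dG1: "\<And>x. (G1 has_field_derivative G2 x) (at x)"
    and U: "open U" "x0 \<in> U" and GU: "\<And>x. x \<in> U \<Longrightarrow> G x \<noteq> 0"
    and hU: "\<And>x. x \<in> U \<Longrightarrow> h x = F x / G x" and F0: "F x0 = 0"
  shows "deriv (deriv h) x0 = (F2 x0 * G x0 - 2 * F1 x0 * G1 x0) / (G x0)^2"
proof -
  define R1 where "R1 = (\<lambda>y. (F1 y * G y - F y * G1 y) / (G y)^2)"
  have d1: "deriv h y = R1 y" if y: "y \<in> U" for y
  proof -
    have "eventually (\<lambda>x. x \<in> U) (nhds y)" using U(1) y by (rule eventually_nhds_in_open)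
    then have "eventually (\<lambda>x. h x = F x / G x) (nhds y)" by eventually_elim (rule hU)
    then have "deriv h y = deriv (\<lambda>x. F x / G x) y" by (rule deriv_cong_ev) simp
    also have "\<dots> = R1 y"
    proof (rule DERIV_imp_deriv)
      show "((\<lambda>x. F x / G x) has_field_derivative R1 y) (at y)"
        using DERIV_divide[OF dF dG GU[OF y]] unfolding R1_def
        by (simp add: power2_eq_square)
    qed
    finally show ?thesis .
  qed
  have "eventually (\<lambda>x. x \<in> U) (nhds x0)" using U by (rule eventually_nhds_in_open)
  then have "eventually (\<lambda>x. deriv h x = R1 x) (nhds x0)" by eventually_elim (rule d1)
  then have "deriv (deriv h) x0 = deriv R1 x0" by (rule deriv_cong_ev) simp
  also have "\<dots> = (F2 x0 * G x0 - 2 * F1 x0 * G1 x0) / (G x0)^2"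
  proof (rule DERIV_imp_deriv)
    have G0: "G x0 \<noteq> 0" using GU U by auto
    have "(R1 has_field_derivative
       ((F2 x0 * G x0 + F1 x0 * G1 x0 - (F1 x0 * G1 x0 + F x0 * G2 x0)) * (G x0)^2
         - (F1 x0 * G x0 - F x0 * G1 x0) * (2 * G x0 * G1 x0)) / ((G x0)^2 * (G x0)^2)) (at x0)"
      unfolding R1_def
      apply (rule DERIV_divide)
        apply (rule DERIV_diff)
         apply (rule DERIV_cong[OF DERIV_mult[OF dF1 dG]], simp add: algebra_simps)
        apply (rule DERIV_cong[OF DERIV_mult[OF dF dG1]], simp add: algebra_simps)
       apply (rule DERIV_cong[OF DERIV_power[OF dG, of 2]])
       apply (simp add: power2_eq_square)
      using G0 by simp
    then show "(R1 has_field_derivative (F2 x0 * G x0 - 2 * F1 x0 * G1 x0) / (G x0)^2) (at x0)"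
      by (rule DERIV_cong) (use G0 F0 in \<open>simp add: field_simps power2_eq_square\<close>)
  qed
  finally show ?thesis .
qed



definition "cc = complex_of_real (sqrt 2)"
definition "Pf = (\<lambda>x::complex. 16*x^6 - 60*x^3 - 45)"
definition "Qf = (\<lambda>x::complex. 15*cc*(4*x^3 - 3))"
definition PP :: "complex poly" where "PP = [:-45,0,0,-60,0,0,16:]"
definition QQ :: "complex poly" where "QQ = smult (15*cc) [:-3,0,0,4:]"

lemma cc_nz: "cc \<noteq> 0" unfolding cc_def by simp

lemma poly_PP: "poly PP x = Pf x"
  unfolding PP_def Pf_def by (simp add: algebra_simps eval_nat_numeral)
lemma poly_QQ: "poly QQ x = Qf x"
  unfolding QQ_def Qf_def by (simp add: algebra_simps eval_nat_numeral)
lemma poly_dPP: "poly (pderiv PP) x = 96*x^5 - 180*x^2"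
  unfolding PP_def by (simp add: pderiv_pCons algebra_simps eval_nat_numeral)
lemma poly_dQQ: "poly (pderiv QQ) x = 180*cc*x^2"
  unfolding QQ_def by (simp add: pderiv_pCons pderiv_smult algebra_simps eval_nat_numeral)

lemma r_eq: "Qf x \<noteq> 0 \<Longrightarrow> r_fun x = Pf x / Qf x"
proof -
  assume Q: "Qf x \<noteq> 0"
  have n: "(2*x)^3/6 - 1 = (4*x^3 - 3)/3" by (simp add: field_simps eval_nat_numeral)
  have d: "(2*x)^6/180 - (2*x)^3/6 - 1 = Pf x / 45" unfolding Pf_def by (simp add: field_simps eval_nat_numeral)
  have n0: "4*x^3 - 3 \<noteq> 0" using Q unfolding Qf_def by simp
  show ?thesis
  proof (cases "Pf x = 0")
    case True then show ?thesis unfolding r_fun_def h2_def n d by simp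
  next
    case False then show ?thesis using n0 cc_nz unfolding r_fun_def h2_def n d Qf_def cc_def[symmetric]
      by (simp add: field_simps)
  qed
qed

lemma q_eq: "Pf x \<noteq> 0 \<Longrightarrow> q_fun x = Qf x / Pf x"
proof (cases "Qf x = 0")
  case True
  assume P: "Pf x \<noteq> 0"
  have n: "(2*x)^3/6 - 1 = (4*x^3 - 3)/3" by (simp add: field_simps eval_nat_numeral)
  have n0: "4*x^3 - 3 = 0" using True cc_nz unfolding Qf_def by simp
  show ?thesis unfolding q_fun_def r_fun_def h2_def n n0 using True by simp
next
  case False
  assume P: "Pf x \<noteq> 0"
  show ?thesis unfolding q_fun_def r_eq[OF False] using P False by simp
qed

lemma dPf: "(Pf has_field_derivative (96*x^5 - 180*x^2)) (at x)"
  unfolding Pf_def by (rule derivative_eq_intros refl | simp)+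
lemma dPf1: "((\<lambda>x. 96*x^5 - 180*x^2) has_field_derivative (480*x^4 - 360*x)) (at (x::complex))"
  by (rule derivative_eq_intros refl | simp)+
lemma dQf: "(Qf has_field_derivative (180*cc*x^2)) (at x)"
  unfolding Qf_def by (rule derivative_eq_intros refl | simp)+
lemma dQf1: "((\<lambda>x. 180*cc*x^2) has_field_derivative (360*cc*x)) (at (x::complex))"
  by (rule derivative_eq_intros refl | simp)+

lemma contP: "continuous_on UNIV Pf" unfolding Pf_def by (intro continuous_intros)
lemma contQ: "continuous_on UNIV Qf" unfolding Qf_def by (intro continuous_intros)

lemma part3:
  "\<exists>P Q :: complex poly.
          coprime P Q
        \<and> (\<forall>x. poly Q x \<noteq> 0 \<longrightarrow> r_fun x = poly P x / poly Q x)
        \<and> rsquarefree P \<and> rsquarefree Q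
        \<and> (\<forall>x. poly P x = 0 \<longrightarrow> deriv (deriv r_fun) x = 0)
        \<and> (\<forall>y. poly Q y = 0 \<longrightarrow> deriv (deriv q_fun) y = 0)"
proof (rule exI[of _ PP], rule exI[of _ QQ], intro conjI allI impI)
  show "coprime PP QQ"
  proof (rule coprimeI)
    fix d assume "d dvd PP" "d dvd QQ"
    then have "d dvd (smult (-1/81) 1 * PP + smult (1/(81*15*cc)) [:-12,0,0,4:] * QQ)"
      by (intro dvd_add dvd_mult)
    also have "smult (-1/81) 1 * PP + smult (1/(81*15*cc)) [:-12,0,0,4:] * QQ = 1"
    proof (rule poly_eq_poly_eq_iff[THEN iffD1], rule ext)
      fix x
      show "poly (smult (-1/81) 1 * PP + smult (1/(81*15*cc)) [:-12,0,0,4:] * QQ) x = poly 1 x"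
        using cc_nz unfolding poly_add poly_mult poly_PP poly_QQ Pf_def Qf_def
        by (simp add: field_simps eval_nat_numeral)
    qed
    finally show "is_unit d" .
  qed
  show "r_fun x = poly PP x / poly QQ x" if "poly QQ x \<noteq> 0" for x
    using that r_eq unfolding poly_PP poly_QQ by simp
  show "rsquarefree PP"
    unfolding rsquarefree_roots poly_PP poly_dPP
  proof (intro allI notI)
    fix a assume h: "Pf a = 0 \<and> 96*a^5 - 180*a^2 = 0"
    have "a^2 * (8*a^3 - 15) = 0" using h by (simp add: algebra_simps eval_nat_numeral)
    then have "a^2 = 0 \<or> 8*a^3 - 15 = 0" by (simp only: mult_eq_0_iff)
    then have disj: "a = 0 \<or> a^3 = 15/8" by (auto simp: field_simps)
    have e: "Pf a = 16*(a^3)^2 - 60*a^3 - 45" unfolding Pf_def by (simp add: power_mult[symmetric])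
    from disj show False
    proof
      assume "a = 0" then show False using h unfolding Pf_def by simp
    next
      assume a3: "a^3 = 15/8"
      have "Pf a = 16*(15/8)^2 - 60*(15/8) - 45" by (simp only: e a3)
      then show False using h by (simp add: power2_eq_square field_simps)
    qed
  qed
  show "rsquarefree QQ"
    unfolding rsquarefree_roots poly_QQ poly_dQQ
  proof (intro allI notI)
    fix a assume h: "Qf a = 0 \<and> 180*cc*a^2 = 0"
    then have "a = 0" using cc_nz by simp
    then show False using h cc_nz unfolding Qf_def by simp
  qed
  show "deriv (deriv r_fun) x = 0" if "poly PP x = 0" for x
  proof -
    have P0: "Pf x = 0" using that poly_PP by simp
    have Q0: "Qf x \<noteq> 0"
    proof
      assume "Qf x = 0"
      then have "x^3 = 3/4" using cc_nz unfolding Qf_def by (auto simp: field_simps)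
      moreover have "Pf x = 16*(x^3)^2 - 60*x^3 - 45" unfolding Pf_def by (simp add: power_mult[symmetric])
      ultimately have "Pf x = 16*(3/4)^2 - 60*(3/4) - 45" by (simp only:)
      then show False using P0 by (simp add: power2_eq_square field_simps)
    qed
    have "deriv (deriv r_fun) x = ((480*x^4 - 360*x) * Qf x - 2 * (96*x^5 - 180*x^2) * (180*cc*x^2)) / (Qf x)^2"
      by (rule second_deriv_quot[OF dPf dPf1 dQf dQf1 open_Collect_neq[OF contQ continuous_on_const, of 0]])
         (use Q0 P0 r_eq in auto)
    also have "(480*x^4 - 360*x) * Qf x - 2 * (96*x^5 - 180*x^2) * (180*cc*x^2) = -360*cc*x*Pf x"
      unfolding Qf_def Pf_def by algebra
    finally show ?thesis using P0 by simp
  qed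
  show "deriv (deriv q_fun) y = 0" if "poly QQ y = 0" for y
  proof -
    have Q0: "Qf y = 0" using that poly_QQ by simp
    then have y3: "4*y^3 - 3 = 0" using cc_nz unfolding Qf_def by simp
    have P0: "Pf y \<noteq> 0"
    proof
      assume "Pf y = 0"
      moreover have "y^3 = 3/4" using y3 by (auto simp: field_simps)
      moreover have "Pf y = 16*(y^3)^2 - 60*y^3 - 45" unfolding Pf_def by (simp add: power_mult[symmetric])
      ultimately show False by (simp only:) (simp add: power2_eq_square field_simps)
    qed
    have "deriv (deriv q_fun) y = ((360*cc*y) * Pf y - 2 * (180*cc*y^2) * (96*y^5 - 180*y^2)) / (Pf y)^2"
      by (rule second_deriv_quot[OF dQf dQf1 dPf dPf1 open_Collect_neq[OF contP continuous_on_const, of 0]])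
         (use Q0 P0 q_eq in auto)
    also have "(360*cc*y) * Pf y - 2 * (180*cc*y^2) * (96*y^5 - 180*y^2) = -1800*cc*y*(4*y^3-3)^2"
      unfolding Pf_def by algebra
    finally show ?thesis using y3 by simp
  qed
qed


theorem mainTheorem15:
  shows "(\<forall>xi>0. S_invertible xi \<longleftrightarrow> Delta xi \<noteq> 0)
    \<and> (\<forall>xi>0. S_invertible xi \<longrightarrow>
          (\<exists>p :: real poly.
             (\<forall>f. L2 xi f \<and> ae_eq_on xi (Sop xi f) (\<lambda>_. 1) \<longrightarrow> ae_eq_on xi f (poly p))
           \<and> poly p xi = (xi ^ 3 / 6 - 1) / (xi ^ 6 / 180 - xi ^ 3 / 6 - 1)))
    \<and> (\<exists>P Q :: complex poly.
          coprime P Q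
        \<and> (\<forall>x. poly Q x \<noteq> 0 \<longrightarrow> r_fun x = poly P x / poly Q x)
        \<and> rsquarefree P \<and> rsquarefree Q
        \<and> (\<forall>x. poly P x = 0 \<longrightarrow> deriv (deriv r_fun) x = 0)
        \<and> (\<forall>y. poly Q y = 0 \<longrightarrow> deriv (deriv q_fun) y = 0))"
proof (intro conjI)
  show "\<forall>xi>0. S_invertible xi \<longleftrightarrow> Delta xi \<noteq> 0"
    using inv_if not_inv_if by metis
  show "\<forall>xi>0. S_invertible xi \<longrightarrow>
          (\<exists>p :: real poly.
             (\<forall>f. L2 xi f \<and> ae_eq_on xi (Sop xi f) (\<lambda>_. 1) \<longrightarrow> ae_eq_on xi f (poly p))
           \<and> poly p xi = (xi ^ 3 / 6 - 1) / (xi ^ 6 / 180 - xi ^ 3 / 6 - 1))"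
    using part2 by blast
qed (rule part3)

end
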